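(* For $K\in\mathbb{N}$ let $f^{s,K}_{square}(t)=\frac{2s}{K}\sum_{k=1}^K([t-\tfrac{sk}{K}]_++[-t-\tfrac{sk}{K}]_+)$ and define $$f^K_{inner}(\mathbf{x})=\sum_{i=1}^d f^{\sqrt2,K}_{square}\Big(\tfrac{1}{\sqrt2}\begin{bmatrix}\mathbf{e}_i\\ \mathbf{e}_i\end{bmatrix}^\top\mathbf{x}\Big)-1,\qquad \mathbf{x}\in\mathbb{R}^{2d},$$ where $\mathbf{e}_i$ is the $i$-th standard basis vector of $\mathbb{R}^d$. Then $\sup_{\mathbf{x}\in\mathcal{X}_d}|f^K_{inner}(\mathbf{x})-\langle\mathbf{x}^{(1)},\mathbf{x}^{(2)}\rangle|\le2d(\frac1K+\frac1{K^2})$. Further, there is an absolute constant $C$ such that for every $\beta>0$, $\beta^{-1}f^K_{inner}\in\mathcal{N}_{2,2Kd}$ and $R_2(\beta^{-1}f^K_{inner};2Kd)\le C(d\beta^{-1}+\beta^{-2})$.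
   Context: $\mathcal{X}_d=\mathbb{S}^{d-1}\times\mathbb{S}^{d-1}\subset\mathbb{R}^{2d}$, $d\ge2$; $\mathbf{x}^{(1)},\mathbf{x}^{(2)}$ are the first and last $d$ coordinates of $\mathbf{x}$. $\mathcal{N}_{2,\omega}$ is the set of depth-two ReLU networks $f_\phi(\mathbf{x})=\sum_{k=1}^{\omega_1}a_k[\mathbf{w}_k^\top\mathbf{x}+b_k]_++c$ with $\omega_1\le\omega$; $R_2(f;\omega)=\inf\{\|\phi\|^2/2: f_\phi=f\text{ on }\mathcal{X}_d,\ \omega_1\le\omega\}$, where $\|\phi\|^2$ is the sum of squares of all weights and biases. *)

theory Defs
  imports Complex_Main
begin

text \<open>Vectors of R^n are represented as functions nat => real vanishing outside {0..<n}.\<close>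
definition Rvec :: "nat \<Rightarrow> (nat \<Rightarrow> real) set" where
  "Rvec n = {x. \<forall>j\<ge>n. x j = 0}"

definition relu :: "real \<Rightarrow> real" where
  "relu t = max t 0"

text \<open>X_d = S^{d-1} x S^{d-1} in R^{2d}; x^(1) = coordinates 0..d-1, x^(2) = coordinates d..2d-1.\<close>
definition Xd :: "nat \<Rightarrow> (nat \<Rightarrow> real) set" where
  "Xd d = {x \<in> Rvec (2*d). (\<Sum>i<d. (x i)^2) = 1 \<and> (\<Sum>i<d. (x (d+i))^2) = 1}"

definition inner12 :: "nat \<Rightarrow> (nat \<Rightarrow> real) \<Rightarrow> real" where
  "inner12 d x = (\<Sum>i<d. x i * x (d+i))"

text \<open>Parameters of a depth-two ReLU network: width omega_1, outer weights a_k,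
  inner weights w_k (first 2d coordinates), biases b_k, output bias c.\<close>
record net2 =
  width :: nat
  outw :: "nat \<Rightarrow> real"
  inw :: "nat \<Rightarrow> nat \<Rightarrow> real"
  bias :: "nat \<Rightarrow> real"
  outb :: real

definition net_eval :: "nat \<Rightarrow> net2 \<Rightarrow> (nat \<Rightarrow> real) \<Rightarrow> real" where
  "net_eval d \<phi> x =
     (\<Sum>k<width \<phi>. outw \<phi> k * relu ((\<Sum>j<2*d. inw \<phi> k j * x j) + bias \<phi> k)) + outb \<phi>"

definition net_sqnorm :: "nat \<Rightarrow> net2 \<Rightarrow> real" where
  "net_sqnorm d \<phi> =
     (\<Sum>k<width \<phi>. (outw \<phi> k)^2 + (\<Sum>j<2*d. (inw \<phi> k j)^2) + (bias \<phi> k)^2) + (outb \<phi>)^2"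

definition in_N2 :: "nat \<Rightarrow> nat \<Rightarrow> ((nat \<Rightarrow> real) \<Rightarrow> real) \<Rightarrow> bool" where
  "in_N2 d \<omega> f \<longleftrightarrow> (\<exists>\<phi>. width \<phi> \<le> \<omega> \<and> (\<forall>x\<in>Rvec (2*d). net_eval d \<phi> x = f x))"

definition R2 :: "nat \<Rightarrow> nat \<Rightarrow> ((nat \<Rightarrow> real) \<Rightarrow> real) \<Rightarrow> real" where
  "R2 d \<omega> f = Inf {net_sqnorm d \<phi> / 2 | \<phi>. width \<phi> \<le> \<omega> \<and> (\<forall>x\<in>Xd d. net_eval d \<phi> x = f x)}"

definition f_square :: "real \<Rightarrow> nat \<Rightarrow> real \<Rightarrow> real" where
  "f_square s K t = 2 * s / real K *
     (\<Sum>k=1..K. relu (t - s * real k / real K) + relu (- t - s * real k / real K))"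

definition f_inner :: "nat \<Rightarrow> nat \<Rightarrow> (nat \<Rightarrow> real) \<Rightarrow> real" where
  "f_inner d K x = (\<Sum>i<d. f_square (sqrt 2) K ((x i + x (d+i)) / sqrt 2)) - 1"

end

theory Submission imports Defs begin

lemma relu_sum_closed:
  fixes s u :: real and K j :: nat
  assumes s: "s > 0" and K: "K \<ge> 1" and u0: "0 \<le> u" and j: "j \<le> K"
    and jl: "s * real j / real K \<le> u" and ju: "u < s * (real j + 1) / real K"
  shows "(\<Sum>k=1..K. relu (u - s * real k / real K)) = real j * u - s / real K * (real j * (real j + 1) / 2)"
proof -
  have Kp: "real K > 0" using K by simp
  have "(\<Sum>k=1..K. relu (u - s * real k / real K)) = (\<Sum>k=1..K. if k \<le> j then u - s * real k / real K else 0)"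
  proof (rule sum.cong[OF refl])
    fix k assume k: "k \<in> {1..K}"
    show "relu (u - s * real k / real K) = (if k \<le> j then u - s * real k / real K else 0)"
    proof (cases "k \<le> j")
      case True
      have "s * real k / real K \<le> s * real j / real K"
        using True s Kp by (simp add: divide_right_mono)
      then show ?thesis using True jl by (simp add: relu_def)
    next
      case False
      then have "real k \<ge> real j + 1" by simp
      then have "s * (real j + 1) / real K \<le> s * real k / real K"
        using s Kp by (simp add: divide_right_mono)
      then show ?thesis using False ju by (simp add: relu_def)
    qed
  qed
  also have "\<dots> = (\<Sum>k\<in>{k\<in>{1..K}. k \<le> j}. u - s * real k / real K)"
    by (subst sum.inter_filter) auto
  also have "{k\<in>{1..K}. k \<le> j} = {1..j}" using j by auto
  also have "(\<Sum>k=1..j. u - s * real k / real K) = real j * u - s / real K * (\<Sum>k=1..j. real k)"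
    by (simp add: sum_subtractf sum_distrib_left sum_divide_distrib)
  also have "(\<Sum>k=1..j. real k) = real j * (real j + 1) / 2"
    using double_gauss_sum_from_Suc_0[of j, where 'a=real] by simp
  finally show ?thesis .
qed

lemma sq_approx:
  fixes s u :: real and K :: nat
  assumes s: "s > 0" and K: "K \<ge> 1" and u0: "0 \<le> u" and us: "u \<le> s"
  shows "0 \<le> u^2 - 2 * s / real K * (\<Sum>k=1..K. relu (u - s * real k / real K))
       \<and> u^2 - 2 * s / real K * (\<Sum>k=1..K. relu (u - s * real k / real K)) \<le> s^2 / real K + s^2 / (real K)^2"
proof -
  have Kp: "real K > 0" using K by simp
  define j where "j = nat \<lfloor>u * real K / s\<rfloor>"
  have q0: "u * real K / s \<ge> 0" using u0 Kp s by simp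
  have jfl: "real j = of_int \<lfloor>u * real K / s\<rfloor>" using q0 unfolding j_def by simp
  have j1: "real j \<le> u * real K / s" using jfl by linarith
  have j2: "u * real K / s < real j + 1" using jfl by linarith
  have "u * real K / s \<le> real K" using us s Kp by (simp add: divide_le_eq mult_right_mono)
  then have jK: "j \<le> K" using j1 by linarith
  have jl: "s * real j / real K \<le> u" using j1 s Kp by (simp add: field_simps)
  have ju: "u < s * (real j + 1) / real K" using j2 s Kp by (simp add: field_simps)
  define v where "v = s * real j / real K"
  have eq: "u^2 - 2 * s / real K * (\<Sum>k=1..K. relu (u - s * real k / real K)) = (u - v)^2 + s * v / real K"
    unfolding relu_sum_closed[OF s K u0 jK jl ju] v_def using Kp
    by (simp add: field_simps power2_eq_square)
  have v0: "0 \<le> v" unfolding v_def using s Kp by simp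
  have vv: "s*(real j+1)/real K = v + s/real K" using Kp by (simp add: v_def field_simps)
  have uv: "0 \<le> u - v" "u - v \<le> s / real K" using jl ju vv unfolding v_def by auto
  have vs: "v \<le> s" using jl us unfolding v_def by simp
  have "(u - v)^2 \<le> (s / real K)^2" using uv by (simp add: power_mono)
  moreover have "s * v / real K \<le> s * s / real K" using vs s Kp by (simp add: divide_right_mono)
  ultimately show ?thesis unfolding eq using v0 s Kp
    by (auto simp: power2_eq_square power_divide intro!: add_nonneg_nonneg)
qed

lemma fsq_bound:
  fixes s t :: real and K :: nat
  assumes s: "s > 0" and K: "K \<ge> 1" and ts: "\<bar>t\<bar> \<le> s"
  shows "0 \<le> t^2 - f_square s K t \<and> t^2 - f_square s K t \<le> s^2 / real K + s^2 / (real K)^2"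
proof -
  have Kp: "real K > 0" using K by simp
  have "f_square s K t = 2 * s / real K * (\<Sum>k=1..K. relu (\<bar>t\<bar> - s * real k / real K))"
    unfolding f_square_def
  proof (intro arg_cong[where f="\<lambda>z. 2 * s / real K * z"] sum.cong refl)
    fix k assume "k \<in> {1..K}"
    have "s * real k / real K \<ge> 0" using s Kp by simp
    then show "relu (t - s * real k / real K) + relu (- t - s * real k / real K) = relu (\<bar>t\<bar> - s * real k / real K)"
      by (simp add: relu_def abs_if)
  qed
  moreover have "t^2 = \<bar>t\<bar>^2" by simp
  ultimately show ?thesis using sq_approx[OF s K abs_ge_zero ts] by simp
qed

lemma part1:
  assumes K: "K \<ge> 1" and x: "x \<in> Xd d"
  shows "\<bar>f_inner d K x - inner12 d x\<bar> \<le> 2 * real d * (1 / real K + 1 / (real K)^2)"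
proof -
  define t where "t i = (x i + x (d+i)) / sqrt 2" for i
  have x1: "(\<Sum>i<d. (x i)^2) = 1" and x2: "(\<Sum>i<d. (x (d+i))^2) = 1" using x by (auto simp: Xd_def)
  have tb: "\<bar>t i\<bar> \<le> sqrt 2" if i: "i < d" for i
  proof -
    have a: "(x i)^2 \<le> 1" using member_le_sum[of i "{..<d}" "\<lambda>i. (x i)^2"] i x1 by simp
    have b: "(x (d+i))^2 \<le> 1" using member_le_sum[of i "{..<d}" "\<lambda>i. (x (d+i))^2"] i x2 by simp
    have "(x i + x (d+i))^2 \<le> 2 * ((x i)^2 + (x (d+i))^2)"
      using sum_squares_ge_zero[of "x i - x (d+i)" 0] by (simp add: power2_eq_square algebra_simps)
    also have "\<dots> \<le> 4" using a b by simp
    finally have "(x i + x (d+i))^2 \<le> 2^2" by simp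
    then have "\<bar>x i + x (d+i)\<bar> \<le> 2" using abs_le_square_iff[of "x i + x (d+i)" 2] by simp
    moreover have "(2::real) = sqrt 2 * sqrt 2" by simp
    ultimately show ?thesis unfolding t_def by (simp add: abs_div divide_le_eq)
  qed
  have tsq: "(t i)^2 = ((x i)^2 + (x (d+i))^2) / 2 + x i * x (d+i)" for i
    unfolding t_def by (simp add: power_divide power2_eq_square algebra_simps)
  have "(\<Sum>i<d. (t i)^2) = 1 + inner12 d x"
    unfolding tsq inner12_def using x1 x2 by (simp add: sum.distrib sum_divide_distrib[symmetric])
  then have eq: "inner12 d x - f_inner d K x = (\<Sum>i<d. (t i)^2 - f_square (sqrt 2) K (t i))"
    unfolding f_inner_def t_def[symmetric] by (simp add: sum_subtractf)
  define B where "B = 2 / real K + 2 / (real K)^2"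
  have eb: "0 \<le> (t i)^2 - f_square (sqrt 2) K (t i) \<and> (t i)^2 - f_square (sqrt 2) K (t i) \<le> B" if "i < d" for i
    using fsq_bound[OF _ K tb[OF that]] unfolding B_def by simp
  have "0 \<le> inner12 d x - f_inner d K x" unfolding eq using eb by (intro sum_nonneg) auto
  moreover have "inner12 d x - f_inner d K x \<le> real d * B" unfolding eq
    using sum_bounded_above[of "{..<d}" "\<lambda>i. (t i)^2 - f_square (sqrt 2) K (t i)" B] eb by simp
  ultimately show ?thesis unfolding B_def by (simp add: algebra_simps)
qed


lemma sum_decomp:
  fixes f :: "nat \<Rightarrow> real" and n m :: nat
  shows "(\<Sum>k<n*m. f k) = (\<Sum>i<n. \<Sum>r<m. f (i*m + r) :: real)"
proof -
  have "(\<Sum>k<n*m. f k) = (\<Sum>i<n. sum f {i*m..<i*m+m})" using sum.nat_group[of f m n] by simp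
  also have "\<dots> = (\<Sum>i<n. \<Sum>r<m. f (i*m + r))"
  proof (rule sum.cong[OF refl])
    fix i
    have "sum f {0+i*m..<m+i*m} = (\<Sum>r=0..<m. f (r + i*m))" by (rule sum.shift_bounds_nat_ivl)
    then show "sum f {i*m..<i*m+m} = (\<Sum>r<m. f (i*m + r))" by (simp add: add.commute atLeast0LessThan)
  qed
  finally show ?thesis .
qed

lemma inner_sum:
  fixes c :: real and x :: "nat \<Rightarrow> real" and i d :: nat
  assumes "i < d"
  shows "(\<Sum>j<2*d. (c * ((if j = i then 1 else 0) + (if j = d+i then 1 else 0))) * x j) = c * (x i + x (d+i))"
proof -
  have "(\<Sum>j<2*d. (c * ((if j = i then 1 else 0) + (if j = d+i then 1 else 0))) * x j)
      = (\<Sum>j<2*d. (if j = i then c * x j else 0)) + (\<Sum>j<2*d. (if j = d+i then c * x j else 0))"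
    by (subst sum.distrib[symmetric]) (rule sum.cong, auto)
  also have "\<dots> = c * x i + c * x (d+i)" using assms by (simp add: sum.delta)
  finally show ?thesis by (simp add: algebra_simps)
qed

lemma inner_sq:
  fixes c :: real and i d :: nat
  assumes "i < d"
  shows "(\<Sum>j<2*d. (c * ((if j = i then 1 else 0) + (if j = d+i then 1 else 0)))^2) = 2 * c^2"
proof -
  have "(\<Sum>j<2*d. (c * ((if j = i then 1 else 0) + (if j = d+i then 1 else 0)))^2)
      = (\<Sum>j<2*d. (if j = i then c^2 else 0)) + (\<Sum>j<2*d. (if j = d+i then c^2 else 0))"
    using assms by (subst sum.distrib[symmetric]) (rule sum.cong, auto)
  also have "\<dots> = 2 * c^2" using assms by (simp add: sum.delta)
  finally show ?thesis .
qed

definition pp :: "nat \<Rightarrow> real \<Rightarrow> real" where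
  "pp K \<beta> = sqrt (2 * sqrt 2 / (real K * \<beta>))"

definition netw :: "nat \<Rightarrow> nat \<Rightarrow> real \<Rightarrow> net2" where
  "netw d K \<beta> = \<lparr>width = 2*K*d, outw = (\<lambda>k. pp K \<beta>),
     inw = (\<lambda>k j. ((if even (k mod (2*K)) then 1 else -1) * (pp K \<beta> / sqrt 2)) *
        ((if j = k div (2*K) then 1 else 0) + (if j = d + k div (2*K) then 1 else 0))),
     bias = (\<lambda>k. - pp K \<beta> * sqrt 2 * real (k mod (2*K) div 2 + 1) / real K),
     outb = -1/\<beta>\<rparr>"

lemma relu_scale: "p \<ge> 0 \<Longrightarrow> relu (p * z) = p * relu z"
  by (simp add: relu_def max_mult_distrib_left)

lemma netw_term:
  assumes K: "K \<ge> 1" and b: "\<beta> > 0" and k: "k div (2*K) < d"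
  shows "outw (netw d K \<beta>) k * relu ((\<Sum>j<2*d. inw (netw d K \<beta>) k j * x j) + bias (netw d K \<beta>) k)
    = 2 * sqrt 2 / (real K * \<beta>) * relu ((if even (k mod (2*K)) then 1 else -1) * ((x (k div (2*K)) + x (d + k div (2*K))) / sqrt 2)
         - sqrt 2 * real (k mod (2*K) div 2 + 1) / real K)"
proof -
  let ?p = "pp K \<beta>"
  let ?\<sigma> = "(if even (k mod (2*K)) then 1 else -1) :: real"
  let ?i = "k div (2*K)"
  have a0: "0 \<le> 2 * sqrt 2 / (real K * \<beta>)" using b by (intro divide_nonneg_nonneg mult_nonneg_nonneg) auto
  have p0: "?p \<ge> 0" unfolding pp_def using a0 by simp
  have pp2: "?p * ?p = 2 * sqrt 2 / (real K * \<beta>)" unfolding pp_def using a0 real_sqrt_mult_self abs_of_nonneg by metis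
  have "(\<Sum>j<2*d. inw (netw d K \<beta>) k j * x j) = (?\<sigma> * (?p / sqrt 2)) * (x ?i + x (d + ?i))"
    unfolding netw_def net2.select_convs by (rule inner_sum[OF k])
  note S = this
  have "(\<Sum>j<2*d. inw (netw d K \<beta>) k j * x j) + bias (netw d K \<beta>) k
     = ?p * (?\<sigma> * ((x ?i + x (d + ?i)) / sqrt 2) - sqrt 2 * real (k mod (2*K) div 2 + 1) / real K)"
    unfolding S by (simp add: netw_def algebra_simps add_divide_distrib diff_divide_distrib)
  moreover have "outw (netw d K \<beta>) k = ?p" by (simp add: netw_def)
  ultimately show ?thesis by (simp only: relu_scale[OF p0] pp2[symmetric] mult.assoc)
qed


lemma pair_sum:
  fixes g :: "bool \<Rightarrow> nat \<Rightarrow> real"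
  shows "(\<Sum>r<2*K. g (even r) (r div 2)) = (\<Sum>m<K. g True m + g False m)"
proof -
  have "(\<Sum>r<2*K. g (even r) (r div 2)) = (\<Sum>r<K*2. g (even r) (r div 2))" by (simp add: mult.commute)
  also have "\<dots> = (\<Sum>m<K. \<Sum>e<2. g (even (m*2+e)) ((m*2+e) div 2))" by (rule sum_decomp)
  also have "\<dots> = (\<Sum>m<K. g True m + g False m)"
  proof (rule sum.cong[OF refl])
    fix m
    have two: "(\<Sum>e<2::nat. G e) = G 0 + G 1" for G :: "nat \<Rightarrow> real" by (simp add: numeral_2_eq_2)
    show "(\<Sum>e<2. g (even (m*2+e)) ((m*2+e) div 2)) = g True m + g False m"
      unfolding two by simp
  qed
  finally show ?thesis .
qed

lemma netw_eval:
  assumes K: "K \<ge> 1" and b: "\<beta> > 0"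
  shows "net_eval d (netw d K \<beta>) x = f_inner d K x / \<beta>"
proof -
  define a where "a = 2 * sqrt 2 / (real K * \<beta>)"
  define t where "t i = (x i + x (d+i)) / sqrt 2" for i
  define g where "g i e m = a * relu ((if e then 1 else -1) * t i - sqrt 2 * real (m + 1) / real K)" for i e m
  have K2: "2*K > 0" using K by simp
  have "net_eval d (netw d K \<beta>) x = (\<Sum>k<d*(2*K). outw (netw d K \<beta>) k * relu ((\<Sum>j<2*d. inw (netw d K \<beta>) k j * x j) + bias (netw d K \<beta>) k)) - 1/\<beta>"
    unfolding net_eval_def by (simp add: netw_def mult.commute mult.left_commute)
  also have "(\<Sum>k<d*(2*K). outw (netw d K \<beta>) k * relu ((\<Sum>j<2*d. inw (netw d K \<beta>) k j * x j) + bias (netw d K \<beta>) k))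
     = (\<Sum>k<d*(2*K). g (k div (2*K)) (even (k mod (2*K))) (k mod (2*K) div 2))"
  proof (rule sum.cong[OF refl])
    fix k assume "k \<in> {..<d*(2*K)}"
    then have "k div (2*K) < d" by (simp add: less_mult_imp_div_less)
    from netw_term[OF K b this, of x] show "outw (netw d K \<beta>) k * relu ((\<Sum>j<2*d. inw (netw d K \<beta>) k j * x j) + bias (netw d K \<beta>) k)
       = g (k div (2*K)) (even (k mod (2*K))) (k mod (2*K) div 2)"
      unfolding g_def a_def t_def by simp
  qed
  also have "\<dots> = (\<Sum>i<d. \<Sum>r<2*K. g ((i*(2*K)+r) div (2*K)) (even ((i*(2*K)+r) mod (2*K))) ((i*(2*K)+r) mod (2*K) div 2))"
    by (rule sum_decomp)
  also have "\<dots> = (\<Sum>i<d. \<Sum>r<2*K. g i (even r) (r div 2))"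
    by (intro sum.cong refl) (simp add: K2)
  also have "\<dots> = (\<Sum>i<d. \<Sum>m<K. g i True m + g i False m)"
    by (intro sum.cong refl pair_sum)
  also have "\<dots> = (\<Sum>i<d. f_square (sqrt 2) K (t i) / \<beta>)"
  proof (intro sum.cong refl)
    fix i
    have "(\<Sum>m<K. g i True m + g i False m) = (\<Sum>m=1..K. g i True (m-1) + g i False (m-1))"
      using sum_bounds_lt_plus1[of "\<lambda>m. g i True (m-1) + g i False (m-1)" K] by simp
    also have "\<dots> = a * (\<Sum>m=1..K. relu (t i - sqrt 2 * real m / real K) + relu (- t i - sqrt 2 * real m / real K))"
      unfolding sum_distrib_left
      by (intro sum.cong refl) (auto simp: g_def distrib_left of_nat_diff)
    also have "\<dots> = f_square (sqrt 2) K (t i) / \<beta>"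
      unfolding f_square_def a_def by simp
    finally show "(\<Sum>m<K. g i True m + g i False m) = f_square (sqrt 2) K (t i) / \<beta>" .
  qed
  finally show ?thesis unfolding f_inner_def t_def by (simp add: sum_divide_distrib diff_divide_distrib)
qed


lemma netw_norm:
  assumes K: "K \<ge> 1" and b: "\<beta> > 0"
  shows "net_sqnorm d (netw d K \<beta>) \<le> 16 * sqrt 2 * real d / \<beta> + 1 / \<beta>^2"
proof -
  define a where "a = 2 * sqrt 2 / (real K * \<beta>)"
  have a0: "0 \<le> a" unfolding a_def using b by (intro divide_nonneg_nonneg mult_nonneg_nonneg) auto
  have pp2: "(pp K \<beta>)^2 = a" unfolding pp_def a_def[symmetric] using a0 by simp
  have Kp: "real K > 0" using K by simp
  have tb: "(outw (netw d K \<beta>) k)^2 + (\<Sum>j<2*d. (inw (netw d K \<beta>) k j)^2) + (bias (netw d K \<beta>) k)^2 \<le> 4 * a"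
    if k: "k \<in> {..<2*K*d}" for k
  proof -
    have i: "k div (2*K) < d" using k by (simp add: less_mult_imp_div_less mult.commute)
    have o: "(outw (netw d K \<beta>) k)^2 = a" using pp2 by (simp add: netw_def)
    have "(\<Sum>j<2*d. (inw (netw d K \<beta>) k j)^2) = 2 * ((if even (k mod (2*K)) then 1 else -1) * (pp K \<beta> / sqrt 2))^2"
      unfolding netw_def net2.select_convs by (rule inner_sq[OF i])
    also have "\<dots> = a" by (simp add: power_mult_distrib power_divide pp2)
    finally have w: "(\<Sum>j<2*d. (inw (netw d K \<beta>) k j)^2) = a" .
    have "k mod (2*K) < K*2" using K by (simp add: mult.commute)
    then have "k mod (2*K) div 2 < K" by (rule less_mult_imp_div_less)
    then have m: "k mod (2*K) div 2 + 1 \<le> K" by simp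
    then have mr: "real (k mod (2*K) div 2 + 1) / real K \<le> 1" using Kp by (simp add: divide_le_eq)
    have mr0: "0 \<le> real (k mod (2*K) div 2 + 1) / real K" by simp
    have "(bias (netw d K \<beta>) k)^2 = 2 * a * (real (k mod (2*K) div 2 + 1) / real K)^2"
      by (simp add: netw_def power_mult_distrib power_divide pp2)
    also have "\<dots> \<le> 2 * a * 1" using mr mr0 a0 by (intro mult_left_mono) (auto simp: power_le_one)
    finally show ?thesis using o w by simp
  qed
  have "net_sqnorm d (netw d K \<beta>) \<le> real (2*K*d) * (4 * a) + 1/\<beta>^2"
    unfolding net_sqnorm_def
    using sum_bounded_above[of "{..<2*K*d}" _ "4*a", OF tb]
    by (simp add: netw_def power_divide)
  also have "real (2*K*d) * (4 * a) = 16 * sqrt 2 * real d / \<beta>"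
    unfolding a_def using Kp b by (simp add: field_simps)
  finally show ?thesis .
qed


theorem lemma13:
  shows "(\<forall>d K. d \<ge> 2 \<longrightarrow> K \<ge> 1 \<longrightarrow>
            (\<forall>x\<in>Xd d. \<bar>f_inner d K x - inner12 d x\<bar> \<le> 2 * real d * (1 / real K + 1 / (real K)^2)))
       \<and> (\<exists>C::real. \<forall>d K (\<beta>::real). d \<ge> 2 \<longrightarrow> K \<ge> 1 \<longrightarrow> \<beta> > 0 \<longrightarrow>
            in_N2 d (2*K*d) (\<lambda>x. f_inner d K x / \<beta>) \<and>
            R2 d (2*K*d) (\<lambda>x. f_inner d K x / \<beta>) \<le> C * (real d / \<beta> + 1 / \<beta>^2))"
proof (intro conjI allI impI ballI)
  fix d K x assume "K \<ge> (1::nat)" "x \<in> Xd d"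
  then show "\<bar>f_inner d K x - inner12 d x\<bar> \<le> 2 * real d * (1 / real K + 1 / (real K)^2)"
    by (rule part1)
next
  show "\<exists>C::real. \<forall>d K (\<beta>::real). d \<ge> 2 \<longrightarrow> K \<ge> 1 \<longrightarrow> \<beta> > 0 \<longrightarrow>
            in_N2 d (2*K*d) (\<lambda>x. f_inner d K x / \<beta>) \<and>
            R2 d (2*K*d) (\<lambda>x. f_inner d K x / \<beta>) \<le> C * (real d / \<beta> + 1 / \<beta>^2)"
  proof (intro exI[of _ 12] allI impI conjI)
    fix d K :: nat and \<beta> :: real
    assume d: "d \<ge> 2" and K: "K \<ge> 1" and b: "\<beta> > 0"
    have w: "width (netw d K \<beta>) = 2*K*d" by (simp add: netw_def)
    show "in_N2 d (2*K*d) (\<lambda>x. f_inner d K x / \<beta>)"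
      unfolding in_N2_def using w netw_eval[OF K b] by (intro exI[of _ "netw d K \<beta>"]) auto
    let ?S = "{net_sqnorm d \<phi> / 2 | \<phi>. width \<phi> \<le> 2*K*d \<and> (\<forall>x\<in>Xd d. net_eval d \<phi> x = f_inner d K x / \<beta>)}"
    have mem: "net_sqnorm d (netw d K \<beta>) / 2 \<in> ?S" using w netw_eval[OF K b] by (intro CollectI exI[of _ "netw d K \<beta>"]) auto
    have nn: "net_sqnorm d \<phi> \<ge> 0" for \<phi>
      unfolding net_sqnorm_def by (intro add_nonneg_nonneg sum_nonneg) auto
    have bdd: "bdd_below ?S" using nn by (intro bdd_belowI[of _ 0]) fastforce
    have "R2 d (2*K*d) (\<lambda>x. f_inner d K x / \<beta>) \<le> net_sqnorm d (netw d K \<beta>) / 2"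
      unfolding R2_def by (rule cInf_lower[OF mem bdd])
    also have "\<dots> \<le> (16 * sqrt 2 * real d / \<beta> + 1 / \<beta>^2) / 2"
      using netw_norm[OF K b, of d] by simp
    also have "\<dots> \<le> 12 * (real d / \<beta> + 1 / \<beta>^2)"
    proof -
      have s2: "sqrt 2 \<le> 3/2" by (rule real_le_lsqrt) (auto simp: power2_eq_square)
      have "0 \<le> real d / \<beta>" using b by simp
      then have "16 * sqrt 2 * real d / \<beta> \<le> 24 * (real d / \<beta>)"
        using mult_right_mono[OF s2, of "real d / \<beta>"] by simp
      moreover have "1 / \<beta>^2 \<le> 24 / \<beta>^2" using b by (intro divide_right_mono) auto
      ultimately show ?thesis by (simp add: field_simps)
    qed
    finally show "R2 d (2*K*d) (\<lambda>x. f_inner d K x / \<beta>) \<le> 12 * (real d / \<beta> + 1 / \<beta>^2)" .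
  qed
qed

end
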